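(* Assume the setting described in the context and that the joint distribution of $(X,\mathcal X_n)$ is absolutely continuous with respect to Lebesgue measure on $\mathbb R^{n+1}$. Consider the conditions: (i) $\Lambda$ (respectively $\Lambda_g$) is compact in $\mathbb R^n$; (ii) the copula diagonal $C_{X,\widehat X_\lambda}(x,x)$ of $(X,\widehat X_\lambda)$ is continuous in $\lambda$ on $\Lambda$ (respectively $\Lambda_g$), uniformly with respect to $x\in[0,1]$; (iii) for each $\lambda\in\Lambda$, $\widehat X_\lambda$ has an absolutely continuous distribution with density $p_{\widehat X_\lambda}$, and the map $\lambda\mapsto p_{\widehat X_\lambda}$ from $\Lambda$ to $L^1(\mathbb R)$ is continuous with respect to the $L^1$-norm. If (i) and (ii) hold (for $\Lambda_g$), then problem (P1) has a solution. If (i)–(iii) hold (for $\Lambda$), then problems (P2) and (P3) have solutions.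
   Context: Let $X$ be a real random variable whose c.d.f. $F_X$ is continuous and strictly increasing on the support of $X$, and let $\mathcal X_n=(X_1,\dots,X_n)$ be a random vector on the same probability space. Let $\Lambda\subseteq\mathbb R^n$ and let $g:\Lambda\times\mathbb R^n\to\mathbb R$ be continuous (hence measurable); set $\widehat X_\lambda:=g(\lambda,\mathcal X_n)$, $\lambda\in\Lambda$, and $\Lambda_g:=\{\lambda\in\Lambda: F_X(\widehat X_\lambda)\text{ is uniformly distributed on }(0,1)\}$. Fix $\gamma>0$ and put $Y_1^\lambda:=F_X(\widehat X_\lambda)$ with c.d.f. $F_{Y_1^\lambda}$. The problems are: (P1) minimize $\mathbf E F_X(X\vee\widehat X_\lambda)$ over $\lambda\in\Lambda_g$; (P2) minimize $2\,\mathbf E F_X(X\vee\widehat X_\lambda)-\mathbf E F_X(\widehat X_\lambda)$ over $\lambda\in\Lambda$; (P3) minimize $2\,\mathbf E F_X(X\vee\widehat X_\lambda)-\mathbf E F_X(\widehat X_\lambda)+\gamma\int_0^1F_{Y_1^\lambda}(y)\big[F_{Y_1^\lambda}(y)-2y\big]dy$ over $\lambda\in\Lambda$. Here $a\vee b=\max\{a,b\}$. *)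

theory Defs
  imports "HOL-Probability.Probability"
begin

definition rv_cdf :: "'a measure \<Rightarrow> ('a \<Rightarrow> real) \<Rightarrow> real \<Rightarrow> real" where
  "rv_cdf M Y = cdf (distr M borel Y)"

definition rv_support :: "'a measure \<Rightarrow> ('a \<Rightarrow> real) \<Rightarrow> real set" where
  "rv_support M Y = {x. \<forall>e>0. measure M {\<omega>\<in>space M. Y \<omega> \<in> ball x e} > 0}"

definition is_copula :: "(real \<Rightarrow> real \<Rightarrow> real) \<Rightarrow> bool" where
  "is_copula C \<longleftrightarrow>
     (\<forall>u\<in>{0..1}. C u 0 = 0 \<and> C 0 u = 0 \<and> C u 1 = u \<and> C 1 u = u) \<and>
     (\<forall>u1 u2 v1 v2. 0 \<le> u1 \<longrightarrow> u1 \<le> u2 \<longrightarrow> u2 \<le> 1 \<longrightarrow> 0 \<le> v1 \<longrightarrow> v1 \<le> v2 \<longrightarrow> v2 \<le> 1 \<longrightarrow>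
        C u2 v2 - C u2 v1 - C u1 v2 + C u1 v1 \<ge> 0)"

definition copula_of :: "'a measure \<Rightarrow> ('a \<Rightarrow> real) \<Rightarrow> ('a \<Rightarrow> real) \<Rightarrow> (real \<Rightarrow> real \<Rightarrow> real) \<Rightarrow> bool" where
  "copula_of M Y Z C \<longleftrightarrow> is_copula C \<and>
     (\<forall>s t. measure M {\<omega>\<in>space M. Y \<omega> \<le> s \<and> Z \<omega> \<le> t} = C (rv_cdf M Y s) (rv_cdf M Z t))"

definition copula_diag_unif_cont ::
  "'a measure \<Rightarrow> ('a \<Rightarrow> real) \<Rightarrow> ('l::metric_space \<Rightarrow> 'a \<Rightarrow> real) \<Rightarrow> 'l set \<Rightarrow> bool" where
  "copula_diag_unif_cont M Y Xh L \<longleftrightarrow>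
     (\<exists>C. (\<forall>l\<in>L. copula_of M Y (Xh l) (C l)) \<and>
          (\<forall>l\<in>L. \<forall>e>0. \<exists>d>0. \<forall>m\<in>L. dist m l < d \<longrightarrow>
              (\<forall>x\<in>{0..1}. \<bar>C m x x - C l x x\<bar> < e)))"

definition densities_L1_cont ::
  "'a measure \<Rightarrow> ('l::metric_space \<Rightarrow> 'a \<Rightarrow> real) \<Rightarrow> 'l set \<Rightarrow> bool" where
  "densities_L1_cont M Xh L \<longleftrightarrow>
     (\<exists>p. (\<forall>l\<in>L. (\<forall>x. 0 \<le> p l x) \<and> integrable lborel (p l) \<and>
               distributed M lborel (Xh l) (\<lambda>x. ennreal (p l x))) \<and>
          (\<forall>l\<in>L. \<forall>e>0. \<exists>d>0. \<forall>m\<in>L. dist m l < d \<longrightarrow>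
              (\<integral>x. \<bar>p m x - p l x\<bar> \<partial>lborel) < e))"

definition Lambda_g :: "'a measure \<Rightarrow> ('a \<Rightarrow> real) \<Rightarrow> ('l \<Rightarrow> 'a \<Rightarrow> real) \<Rightarrow> 'l set \<Rightarrow> 'l set" where
  "Lambda_g M X Xh L = {l\<in>L. distr M lborel (\<lambda>\<omega>. rv_cdf M X (Xh l \<omega>)) = uniform_measure lborel {0<..<1}}"

definition J1 :: "'a measure \<Rightarrow> ('a \<Rightarrow> real) \<Rightarrow> ('l \<Rightarrow> 'a \<Rightarrow> real) \<Rightarrow> 'l \<Rightarrow> real" where
  "J1 M X Xh l = (\<integral>\<omega>. rv_cdf M X (max (X \<omega>) (Xh l \<omega>)) \<partial>M)"

definition J2 :: "'a measure \<Rightarrow> ('a \<Rightarrow> real) \<Rightarrow> ('l \<Rightarrow> 'a \<Rightarrow> real) \<Rightarrow> 'l \<Rightarrow> real" where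
  "J2 M X Xh l = 2 * J1 M X Xh l - (\<integral>\<omega>. rv_cdf M X (Xh l \<omega>) \<partial>M)"

definition J3 :: "'a measure \<Rightarrow> ('a \<Rightarrow> real) \<Rightarrow> ('l \<Rightarrow> 'a \<Rightarrow> real) \<Rightarrow> real \<Rightarrow> 'l \<Rightarrow> real" where
  "J3 M X Xh \<gamma> l = J2 M X Xh l +
     \<gamma> * (let G = rv_cdf M (\<lambda>\<omega>. rv_cdf M X (Xh l \<omega>)) in
           (LBINT y=0..1. G y * (G y - 2 * y)))"

end

theory Submission
  imports Defs
begin

lemma rvcdf_eq:
  assumes "prob_space M" "Y \<in> borel_measurable M"
  shows "rv_cdf M Y x = measure M {\<omega>\<in>space M. Y \<omega> \<le> x}"
  unfolding rv_cdf_def cdf_def using assms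
  by (subst measure_distr) (auto intro!: arg_cong[where f="measure M"])

lemma rvcdf_bounds:
  assumes "prob_space M" "Y \<in> borel_measurable M"
  shows "0 \<le> rv_cdf M Y x" "rv_cdf M Y x \<le> 1"
  using assms by (auto simp: rvcdf_eq prob_space.prob_le_1)

lemma rvcdf_mono:
  assumes "prob_space M" "Y \<in> borel_measurable M"
  shows "mono (rv_cdf M Y)"
proof -
  interpret prob_space M by fact
  show ?thesis unfolding mono_def using assms
    by (auto simp: rvcdf_eq intro!: finite_measure_mono)
qed

lemma rvcdf_integral:
  assumes "prob_space M" "Y \<in> borel_measurable M"
  shows "rv_cdf M Y x = integral\<^sup>L M (\<lambda>\<omega>. indicator {..x} (Y \<omega>))"
proof -
  have "integral\<^sup>L M (\<lambda>\<omega>. indicator {..x} (Y \<omega>)) = integral\<^sup>L M (indicator {\<omega>\<in>space M. Y \<omega> \<le> x})"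
    by (rule Bochner_Integration.integral_cong) (auto simp: indicator_def)
  also have "\<dots> = measure M {\<omega>\<in>space M. Y \<omega> \<le> x}"
    by (simp add: Int_absorb2 subset_iff) 
  finally show ?thesis using assms by (simp add: rvcdf_eq)
qed

lemma rvcdf_conv:
  assumes P: "prob_space M" and m: "\<And>n. Y n \<in> borel_measurable M" "Y0 \<in> borel_measurable M"
    and lim: "\<And>\<omega>. \<omega> \<in> space M \<Longrightarrow> (\<lambda>n. Y n \<omega>) \<longlonglongrightarrow> Y0 \<omega>"
    and z: "measure M {\<omega>\<in>space M. Y0 \<omega> = y} = 0"
  shows "(\<lambda>n. rv_cdf M (Y n) y) \<longlonglongrightarrow> rv_cdf M Y0 y"
proof -
  interpret prob_space M by fact
  have N: "{\<omega>\<in>space M. Y0 \<omega> = y} \<in> null_sets M"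
    using z m by (simp add: null_sets_def emeasure_eq_measure)
  have ae: "AE \<omega> in M. Y0 \<omega> \<noteq> y"
    using AE_not_in[OF N] AE_space by eventually_elim auto
  have "(\<lambda>n. integral\<^sup>L M (\<lambda>\<omega>. indicator {..y} (Y n \<omega>) :: real)) \<longlonglongrightarrow> integral\<^sup>L M (\<lambda>\<omega>. indicator {..y} (Y0 \<omega>))"
  proof (rule integral_dominated_convergence[where w="\<lambda>_. 1"])
    show "AE \<omega> in M. (\<lambda>n. indicator {..y} (Y n \<omega>) :: real) \<longlonglongrightarrow> indicator {..y} (Y0 \<omega>)"
      using ae AE_space
    proof eventually_elim
      case (elim \<omega>)
      show ?case
      proof (cases "Y0 \<omega> < y")
        case True
        then have "eventually (\<lambda>n. Y n \<omega> < y) sequentially"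
          using order_tendstoD(2)[OF lim] elim by auto
        then have "eventually (\<lambda>n. (indicator {..y} (Y n \<omega>) :: real) = indicator {..y} (Y0 \<omega>)) sequentially"
          by eventually_elim (use True in auto)
        then show ?thesis by (rule tendsto_eventually)
      next
        case False
        then have "Y0 \<omega> > y" using elim by auto
        then have "eventually (\<lambda>n. Y n \<omega> > y) sequentially"
          using order_tendstoD(1)[OF lim] elim by auto
        then have "eventually (\<lambda>n. (indicator {..y} (Y n \<omega>) :: real) = indicator {..y} (Y0 \<omega>)) sequentially"
          by eventually_elim (use \<open>Y0 \<omega> > y\<close> in auto)
        then show ?thesis by (rule tendsto_eventually)
      qed
    qed
  qed (use m in \<open>auto simp: indicator_def\<close>)
  then show ?thesis using m by (simp add: rvcdf_integral[OF P])
qed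

lemma atoms_countable:
  fixes Y :: "'a \<Rightarrow> real"
  assumes P: "prob_space M" and m: "Y \<in> borel_measurable M"
  shows "countable {y. measure M {\<omega>\<in>space M. Y \<omega> = y} \<noteq> 0}"
proof -
  interpret D: prob_space "distr M borel Y" using P m by (rule prob_space.prob_space_distr)
  have "measure (distr M borel Y) {y} = measure M {\<omega>\<in>space M. Y \<omega> = y}" for y
    using m by (subst measure_distr) (auto intro!: arg_cong[where f="measure M"] borel_closed closed_singleton)
  then show ?thesis using D.countable_support by simp
qed

lemma LBINT01: fixes f :: "real \<Rightarrow> real" shows "(LBINT y=0..1. f y) = integral\<^sup>L lborel (\<lambda>y. indicator {0..1} y * f y)"
  using interval_integral_Icc[of 0 1 f] by (simp add: set_lebesgue_integral_def zero_ereal_def one_ereal_def)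

lemma bound3:
  fixes a y :: real
  assumes "0 \<le> a" "a \<le> 1" "0 \<le> y" "y \<le> 1"
  shows "\<bar>a * (a - 2 * y)\<bar> \<le> 3"
proof -
  have "a*a \<le> 1" using assms by (simp add: mult_le_one)
  moreover have "a*y \<le> 1" using assms by (simp add: mult_le_one)
  moreover have "0 \<le> a*a" "0 \<le> a*y" using assms by auto
  moreover have "a * (a - 2 * y) = a*a - 2*(a*y)" by (simp add: algebra_simps)
  ultimately show ?thesis unfolding abs_le_iff by linarith
qed

lemma main_cont:
  fixes M :: "'a measure" and X :: "'a \<Rightarrow> real" and Xs :: "'a \<Rightarrow> real^'n"
    and \<Lambda> :: "(real^'n) set" and g :: "real^'n \<Rightarrow> real^'n \<Rightarrow> real" and \<gamma> :: real
  assumes P: "prob_space M"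
    and mX: "X \<in> borel_measurable M" and mXs: "Xs \<in> borel_measurable M"
    and Fc: "continuous_on UNIV (rv_cdf M X)"
    and gc: "continuous_on (\<Lambda> \<times> UNIV) (\<lambda>(l, v). g l v)"
  shows "continuous_on \<Lambda> (J1 M X (\<lambda>l \<omega>. g l (Xs \<omega>)))
       \<and> continuous_on \<Lambda> (J2 M X (\<lambda>l \<omega>. g l (Xs \<omega>)))
       \<and> continuous_on \<Lambda> (J3 M X (\<lambda>l \<omega>. g l (Xs \<omega>)) \<gamma>)"
proof -
  interpret prob_space M by fact
  define F where "F = rv_cdf M X"
  define Xh where "Xh = (\<lambda>l \<omega>. g l (Xs \<omega>))"
  have gl: "continuous_on UNIV (g l)" if "l \<in> \<Lambda>" for l
  proof -
    have "continuous_on UNIV ((\<lambda>(l, v). g l v) \<circ> (\<lambda>v. (l, v)))"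
      by (rule continuous_on_compose[OF _ continuous_on_subset[OF gc]])
         (use that in \<open>auto intro!: continuous_intros\<close>)
    then show ?thesis by (simp add: o_def)
  qed
  have mh: "Xh l \<in> borel_measurable M" if "l \<in> \<Lambda>" for l
    unfolding Xh_def using measurable_compose[OF mXs borel_measurable_continuous_onI[OF gl[OF that]]]
    by (simp add: o_def)
  have Fcont: "isCont F x" for x
    using Fc unfolding F_def by (simp add: continuous_on_eq_continuous_at)
  have mF: "F \<in> borel_measurable borel"
    unfolding F_def by (rule borel_measurable_continuous_onI[OF Fc])
  have Fb: "0 \<le> F x" "F x \<le> 1" for x
    unfolding F_def using rvcdf_bounds[OF P mX] by auto
  have pw: "(\<lambda>n. g (u n) v) \<longlonglongrightarrow> g a v"
    if "\<And>n. u n \<in> \<Lambda>" "a \<in> \<Lambda>" "u \<longlonglongrightarrow> a" for u a v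
  proof -
    have "(((\<lambda>(l, v). g l v) \<circ> (\<lambda>n. (u n, v))) \<longlongrightarrow> (\<lambda>(l, v). g l v) (a, v)) sequentially"
      using gc[unfolded continuous_on_sequentially, rule_format, of "(a, v)" "\<lambda>n. (u n, v)"] that
        tendsto_Pair[OF that(3) tendsto_const[of v]] by auto
    then show ?thesis by (simp add: o_def)
  qed
  have Vc: "(\<lambda>n. F (Xh (u n) \<omega>)) \<longlonglongrightarrow> F (Xh a \<omega>)"
    if "\<And>n. u n \<in> \<Lambda>" "a \<in> \<Lambda>" "u \<longlonglongrightarrow> a" for u a \<omega>
    unfolding Xh_def by (rule isCont_tendsto_compose[OF Fcont pw[OF that]])
  have mV: "(\<lambda>\<omega>. F (Xh l \<omega>)) \<in> borel_measurable M" if "l \<in> \<Lambda>" for l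
    using measurable_compose[OF mh[OF that] mF] by (simp add: o_def)
  have E1: "(\<lambda>n. J1 M X Xh (u n)) \<longlonglongrightarrow> J1 M X Xh a"
    if u: "\<And>n. u n \<in> \<Lambda>" "a \<in> \<Lambda>" "u \<longlonglongrightarrow> a" for u a
    unfolding J1_def F_def[symmetric]
  proof (rule integral_dominated_convergence[where w="\<lambda>_. 1"])
    show "AE \<omega> in M. (\<lambda>n. F (max (X \<omega>) (Xh (u n) \<omega>))) \<longlonglongrightarrow> F (max (X \<omega>) (Xh a \<omega>))"
      unfolding Xh_def
      by (intro AE_I2 isCont_tendsto_compose[OF Fcont] tendsto_max tendsto_const pw[OF u])
    show "(\<lambda>\<omega>. F (max (X \<omega>) (Xh a \<omega>))) \<in> borel_measurable M"
      by (intro measurable_compose[OF _ mF] borel_measurable_max mX mh u)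
    show "(\<lambda>\<omega>. F (max (X \<omega>) (Xh (u i) \<omega>))) \<in> borel_measurable M" for i
      by (intro measurable_compose[OF _ mF] borel_measurable_max mX mh u)
    show "integrable M (\<lambda>_. 1::real)" by simp
    show "AE \<omega> in M. norm (F (max (X \<omega>) (Xh (u i) \<omega>))) \<le> 1" for i
      using Fb by (intro AE_I2) (simp add: abs_le_iff)
  qed
  have E2: "(\<lambda>n. (\<integral>\<omega>. F (Xh (u n) \<omega>) \<partial>M)) \<longlonglongrightarrow> (\<integral>\<omega>. F (Xh a \<omega>) \<partial>M)"
    if u: "\<And>n. u n \<in> \<Lambda>" "a \<in> \<Lambda>" "u \<longlonglongrightarrow> a" for u a
  proof (rule integral_dominated_convergence[where w="\<lambda>_. 1"])
    show "AE \<omega> in M. (\<lambda>n. F (Xh (u n) \<omega>)) \<longlonglongrightarrow> F (Xh a \<omega>)"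
      by (intro AE_I2 Vc[OF u])
    show "(\<lambda>\<omega>. F (Xh a \<omega>)) \<in> borel_measurable M" by (rule mV[OF u(2)])
    show "(\<lambda>\<omega>. F (Xh (u i) \<omega>)) \<in> borel_measurable M" for i by (rule mV[OF u(1)])
    show "integrable M (\<lambda>_. 1::real)" by simp
    show "AE \<omega> in M. norm (F (Xh (u i) \<omega>)) \<le> 1" for i
      using Fb by (intro AE_I2) (simp add: abs_le_iff)
  qed
  define G where "G l = rv_cdf M (\<lambda>\<omega>. F (Xh l \<omega>))" for l
  have Gb: "0 \<le> G l y" "G l y \<le> 1" if "l \<in> \<Lambda>" for l y
    unfolding G_def using rvcdf_bounds[OF P mV[OF that]] by auto
  have mG: "G l \<in> borel_measurable borel" if "l \<in> \<Lambda>" for l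
    unfolding G_def by (rule borel_measurable_mono[OF rvcdf_mono[OF P mV[OF that]]])
  have E3: "(\<lambda>n. (LBINT y=0..1. G (u n) y * (G (u n) y - 2 * y))) \<longlonglongrightarrow> (LBINT y=0..1. G a y * (G a y - 2 * y))"
    if u: "\<And>n. u n \<in> \<Lambda>" "a \<in> \<Lambda>" "u \<longlonglongrightarrow> a" for u a
    unfolding LBINT01
  proof (rule integral_dominated_convergence[where w="\<lambda>y. 3 * indicator {0..1} y"])
    let ?A = "{y. measure M {\<omega>\<in>space M. F (Xh a \<omega>) = y} \<noteq> 0}"
    have "AE y in lborel. y \<notin> ?A"
      by (intro AE_not_in countable_imp_null_set_lborel atoms_countable[OF P mV[OF u(2)]])
    then show "AE y in lborel. (\<lambda>n. indicator {0..1} y * (G (u n) y * (G (u n) y - 2 * y)))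
        \<longlonglongrightarrow> indicator {0..1} y * (G a y * (G a y - 2 * y))"
    proof eventually_elim
      case (elim y)
      have "(\<lambda>n. G (u n) y) \<longlonglongrightarrow> G a y"
        unfolding G_def
        by (rule rvcdf_conv[OF P mV[OF u(1)] mV[OF u(2)] Vc[OF u]]) (use elim in auto)
      then show ?case by (intro tendsto_intros)
    qed
    show "AE y in lborel. norm (indicator {0..1} y * (G (u n) y * (G (u n) y - 2 * y))) \<le> 3 * indicator {0..1} y" for n
      by (intro AE_I2) (auto simp: indicator_def intro!: bound3 Gb[OF u(1)])
    show "(\<lambda>y. indicator {0..1} y * (G a y * (G a y - 2 * y))) \<in> borel_measurable lborel"
      using mG[OF u(2)] by measurable
    show "(\<lambda>y. indicator {0..1} y * (G (u i) y * (G (u i) y - 2 * y))) \<in> borel_measurable lborel" for i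
      using mG[OF u(1)] by measurable
    show "integrable lborel (\<lambda>y::real. 3 * indicator {0..1} y :: real)"
      by (intro integrable_mult_right integrable_real_indicator) auto
  qed
  have L2: "(\<lambda>n. J2 M X Xh (u n)) \<longlonglongrightarrow> J2 M X Xh a"
    if u: "\<And>n. u n \<in> \<Lambda>" "a \<in> \<Lambda>" "u \<longlonglongrightarrow> a" for u a
    unfolding J2_def F_def[symmetric]
    by (intro tendsto_diff tendsto_mult_left E1[OF u] E2[OF u])
  have L3: "(\<lambda>n. J3 M X Xh \<gamma> (u n)) \<longlonglongrightarrow> J3 M X Xh \<gamma> a"
    if u: "\<And>n. u n \<in> \<Lambda>" "a \<in> \<Lambda>" "u \<longlonglongrightarrow> a" for u a
    unfolding J3_def Let_def F_def[symmetric] G_def[symmetric]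
    by (intro tendsto_add tendsto_mult_left L2[OF u] E3[OF u])
  have C1: "continuous_on \<Lambda> (J1 M X Xh)"
  proof (rule continuous_on_sequentiallyI)
    fix u a assume "\<forall>n. u n \<in> \<Lambda>" "a \<in> \<Lambda>" "u \<longlonglongrightarrow> a"
    then show "(\<lambda>n. J1 M X Xh (u n)) \<longlonglongrightarrow> J1 M X Xh a" by (intro E1) auto
  qed
  have C2: "continuous_on \<Lambda> (J2 M X Xh)"
  proof (rule continuous_on_sequentiallyI)
    fix u a assume "\<forall>n. u n \<in> \<Lambda>" "a \<in> \<Lambda>" "u \<longlonglongrightarrow> a"
    then show "(\<lambda>n. J2 M X Xh (u n)) \<longlonglongrightarrow> J2 M X Xh a" by (intro L2) auto
  qed
  have C3: "continuous_on \<Lambda> (J3 M X Xh \<gamma>)"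
  proof (rule continuous_on_sequentiallyI)
    fix u a assume "\<forall>n. u n \<in> \<Lambda>" "a \<in> \<Lambda>" "u \<longlonglongrightarrow> a"
    then show "(\<lambda>n. J3 M X Xh \<gamma> (u n)) \<longlonglongrightarrow> J3 M X Xh \<gamma> a" by (intro L3) auto
  qed
  show ?thesis using C1 C2 C3 by (simp add: Xh_def)
qed

theorem mainTheorem10:
  fixes M :: "'a measure" and X :: "'a \<Rightarrow> real" and Xs :: "'a \<Rightarrow> real^'n"
    and \<Lambda> :: "(real^'n) set" and g :: "real^'n \<Rightarrow> real^'n \<Rightarrow> real" and \<gamma> :: real
  assumes "prob_space M"
    and "X \<in> borel_measurable M" and "Xs \<in> borel_measurable M"
    and "continuous_on UNIV (rv_cdf M X)"
    and "strict_mono_on (rv_support M X) (rv_cdf M X)"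
    and "continuous_on (\<Lambda> \<times> UNIV) (\<lambda>(l, v). g l v)"
    and "\<gamma> > 0"
    and "absolutely_continuous lborel (distr M lborel (\<lambda>\<omega>. (X \<omega>, Xs \<omega>)))"
  shows
   "(let Xh = (\<lambda>l \<omega>. g l (Xs \<omega>)); Lg = Lambda_g M X Xh \<Lambda> in
      (compact Lg \<and> Lg \<noteq> {} \<and> copula_diag_unif_cont M X Xh Lg \<longrightarrow>
         (\<exists>l\<in>Lg. \<forall>m\<in>Lg. J1 M X Xh l \<le> J1 M X Xh m)) \<and>
      (compact \<Lambda> \<and> \<Lambda> \<noteq> {} \<and> copula_diag_unif_cont M X Xh \<Lambda> \<and> densities_L1_cont M Xh \<Lambda> \<longrightarrow>
         (\<exists>l\<in>\<Lambda>. \<forall>m\<in>\<Lambda>. J2 M X Xh l \<le> J2 M X Xh m) \<and>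
         (\<exists>l\<in>\<Lambda>. \<forall>m\<in>\<Lambda>. J3 M X Xh \<gamma> l \<le> J3 M X Xh \<gamma> m)))"
proof -
  have C: "continuous_on \<Lambda> (J1 M X (\<lambda>l \<omega>. g l (Xs \<omega>)))
       \<and> continuous_on \<Lambda> (J2 M X (\<lambda>l \<omega>. g l (Xs \<omega>)))
       \<and> continuous_on \<Lambda> (J3 M X (\<lambda>l \<omega>. g l (Xs \<omega>)) \<gamma>)"
    by (rule main_cont[OF assms(1,2,3,4,6)])
  have sub: "Lambda_g M X (\<lambda>l \<omega>. g l (Xs \<omega>)) \<Lambda> \<subseteq> \<Lambda>"
    unfolding Lambda_g_def by auto
  show ?thesis
    unfolding Let_def
    using C continuous_on_subset[OF _ sub]
    by (intro conjI impI continuous_attains_inf) auto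
qed

end
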